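(* Let $1\le s\le d$. Natural data $\bar x$ is uniform on $\{-1,1\}^d$; an augmentation $x\sim\mathcal{A}(\bar x)$ is obtained by sampling independent $\tau_{s+1},\dots,\tau_d\sim\mathrm{Unif}[\tfrac12,1]$, multiplying coordinate $j$ of $\bar x$ by $\tau_j$ for $j=s+1,\dots,d$, and keeping the first $s$ coordinates unchanged. Let $p_{\mathrm{data}}$ be the distribution of $x\sim\mathcal{A}(\bar x)$ and $p_{\mathrm{pos}}$ the distribution of $(x,x^+)$ with $x,x^+\sim\mathcal{A}(\bar x)$ independent given a common $\bar x$. Fix $i\in[s]$ and the downstream label $y(x)=\mathrm{sgn}(x_i)$. For $\lambda>0$ let $\mathcal{L}_\lambda(f)=\mathbb{E}_{(x,x^+)\sim p_{\mathrm{pos}}}[\|f(x)-f(x^+)\|_2^2]+\lambda\|\mathbb{E}_{x\sim p_{\mathrm{data}}}[f(x)f(x)^\top]-\mathbb{I}\|_F^2$. (1) Let $k=s$ and $\mathcal{F}_{\mathrm{linear}}=\{x\mapsto Ux: U\in\mathbb{R}^{k\times d}\}$. For any $\lambda>0$ and any $\hat f\in\arg\min_{f\in\mathcal{F}_{\mathrm{linear}}}\mathcal{L}_\lambda(f)$, there exists $w\in\mathbb{R}^k$ with $\mathbb{E}_{x\sim p_{\mathrm{data}}}[(w^\top\hat f(x)-y(x))^2]=0$. (2) Let $\mathcal{F}_{\mathrm{uni}}$ be the class of all functions $\mathbb{R}^d\to\mathbb{R}^k$. If $k\le2^{d-1}$, then there exists $\hat f'\in\arg\min_{f\in\mathcal{F}_{\mathrm{uni}}}\mathcal{L}_\lambda(f)$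 such that every $w\in\mathbb{R}^k$ satisfies $\mathbb{E}_{x\sim p_{\mathrm{data}}}[(w^\top\hat f'(x)-y(x))^2]\ge1$. *)

theory Defs
  imports "HOL-Probability.Probability"
begin

text \<open>Vectors in R^d are represented as functions nat => real, coordinate j of the
paper corresponds to index j-1 (indices 0..d-1); coordinates >= d are irrelevant.
Embeddings into R^k are functions (nat => real) => (nat => real); only output
coordinates < k are ever used.\<close>

definition cube :: "nat \<Rightarrow> (nat \<Rightarrow> real) set" where
  "cube d = PiE {..<d} (\<lambda>_. {-1, 1})"

definition tau_measure :: "nat \<Rightarrow> nat \<Rightarrow> (nat \<Rightarrow> real) measure" where
  "tau_measure s d = PiM {s..<d} (\<lambda>_. uniform_measure lborel {1/2..1::real})"

definition aug :: "nat \<Rightarrow> nat \<Rightarrow> (nat \<Rightarrow> real) \<Rightarrow> (nat \<Rightarrow> real) \<Rightarrow> (nat \<Rightarrow> real)" where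
  "aug s d xb \<tau> = (\<lambda>j. if j < s then xb j else if j < d then \<tau> j * xb j else 0)"

definition E_data :: "nat \<Rightarrow> nat \<Rightarrow> ((nat \<Rightarrow> real) \<Rightarrow> real) \<Rightarrow> real" where
  "E_data s d g = (\<Sum>xb\<in>cube d. \<integral>\<tau>. g (aug s d xb \<tau>) \<partial>tau_measure s d) / 2 ^ d"

definition E_pos :: "nat \<Rightarrow> nat \<Rightarrow> ((nat \<Rightarrow> real) \<Rightarrow> (nat \<Rightarrow> real) \<Rightarrow> real) \<Rightarrow> real" where
  "E_pos s d g = (\<Sum>xb\<in>cube d.
      \<integral>p. g (aug s d xb (fst p)) (aug s d xb (snd p)) \<partial>(tau_measure s d \<Otimes>\<^sub>M tau_measure s d)) / 2 ^ d"

definition loss :: "nat \<Rightarrow> nat \<Rightarrow> nat \<Rightarrow> real \<Rightarrow> ((nat \<Rightarrow> real) \<Rightarrow> (nat \<Rightarrow> real)) \<Rightarrow> real" where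
  "loss s d k lam f =
     E_pos s d (\<lambda>x x'. \<Sum>j<k. (f x j - f x' j)\<^sup>2)
     + lam * (\<Sum>a<k. \<Sum>b<k. (E_data s d (\<lambda>x. f x a * f x b) - (if a = b then 1 else 0))\<^sup>2)"

definition F_linear :: "nat \<Rightarrow> ((nat \<Rightarrow> real) \<Rightarrow> (nat \<Rightarrow> real)) set" where
  "F_linear d = {f. \<exists>U :: nat \<Rightarrow> nat \<Rightarrow> real. f = (\<lambda>x a. \<Sum>j<d. U a j * x j)}"

text \<open>Universal class: all functions R^d -> R^k for which the loss is well defined,
i.e. each output coordinate is measurable and square integrable under p_data.\<close>
definition F_uni :: "nat \<Rightarrow> nat \<Rightarrow> nat \<Rightarrow> ((nat \<Rightarrow> real) \<Rightarrow> (nat \<Rightarrow> real)) set" where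
  "F_uni s d k = {f. \<forall>xb\<in>cube d. \<forall>j<k.
      (\<lambda>\<tau>. f (aug s d xb \<tau>) j) \<in> borel_measurable (tau_measure s d) \<and>
      integrable (tau_measure s d) (\<lambda>\<tau>. (f (aug s d xb \<tau>) j)\<^sup>2)}"

definition is_argmin :: "('f \<Rightarrow> real) \<Rightarrow> 'f set \<Rightarrow> 'f \<Rightarrow> bool" where
  "is_argmin L F f \<longleftrightarrow> f \<in> F \<and> (\<forall>g\<in>F. L f \<le> L g)"

definition downstream_err ::
  "nat \<Rightarrow> nat \<Rightarrow> nat \<Rightarrow> nat \<Rightarrow> ((nat \<Rightarrow> real) \<Rightarrow> (nat \<Rightarrow> real)) \<Rightarrow> (nat \<Rightarrow> real) \<Rightarrow> real" where
  "downstream_err s d k i f w = E_data s d (\<lambda>x. ((\<Sum>j<k. w j * f x j) - sgn (x i))\<^sup>2)"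

end

theory Submission
  imports Defs "Jordan_Normal_Form.Determinant"
begin


abbreviation NN :: "real measure" where "NN \<equiv> uniform_measure lborel {1/2..1::real}"

lemma NN_prob: "prob_space NN"
  by (rule prob_space_uniform_measure) auto

lemma NN_integral:
  fixes f :: "real \<Rightarrow> real"
  assumes [measurable]: "f \<in> borel_measurable borel"
  shows "integral\<^sup>L NN f = 2 * (\<integral>x. f x * indicator {1/2..1} x \<partial>lborel)"
proof -
  have e: "emeasure lborel {1/2..1::real} = ennreal (1/2)" by simp
  have pw: "indicator {1/2..1::real} x / ennreal (1/2) = ennreal (2 * indicator {1/2..1::real} x)" for x
  proof -
    have "(1::ennreal) / ennreal (1/2) = ennreal 2"
      using divide_ennreal[of 1 "1/2"] by simp
    then show ?thesis by (auto simp: indicator_def)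
  qed
  have "NN = density lborel (\<lambda>x. ennreal (2 * indicator {1/2..1::real} x))"
    unfolding uniform_measure_def e pw ..
  then have "integral\<^sup>L NN f = (\<integral>x. (2 * indicator {1/2..1::real} x) * f x \<partial>lborel)"
    by (simp add: integral_density)
  also have "\<dots> = (\<integral>x. 2 * (f x * indicator {1/2..1::real} x) \<partial>lborel)"
    by (simp add: mult_ac)
  finally show ?thesis by simp
qed

lemma NN_mom1: "(\<integral>x. x \<partial>NN) = 3/4"
  using NN_integral[of "\<lambda>x. x"] integral_power[where a="1/2" and b=1 and k=1] by simp

lemma NN_mom2: "(\<integral>x. x * x \<partial>NN) = 7/12"
  using NN_integral[of "\<lambda>x. x * x"] integral_power[where a="1/2" and b=1 and k=1] integral_power[where a="1/2" and b=1 and k=2]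
  by (simp add: power2_eq_square power3_eq_cube)


lemma NN_AE: "AE t in NN. 1/2 \<le> t \<and> t \<le> 1"
  by (rule AE_uniform_measureI) auto

lemma NN_meas: "(\<lambda>t. t) \<in> borel_measurable NN"
  by (simp add: measurable_cong_sets[OF sets_uniform_measure refl])

lemma NN_int_bd:
  fixes g :: "real \<Rightarrow> real"
  assumes gm: "g \<in> borel_measurable borel"
  and bd: "\<And>t. 1/2 \<le> t \<Longrightarrow> t \<le> 1 \<Longrightarrow> \<bar>g t\<bar> \<le> B"
  shows "integrable NN g"
proof -
  interpret prob_space NN by (rule NN_prob)
  have m: "g \<in> borel_measurable NN"
    using gm measurable_cong_sets[OF sets_uniform_measure refl, of lborel "{1/2..1::real}" borel] by simp
  have a: "AE x in NN. norm (g x) \<le> B"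
    using NN_AE by eventually_elim (use bd in auto)
  show ?thesis by (rule integrable_const_bound[OF a m])
qed

lemma PPS: "product_prob_space (\<lambda>_. NN)"
proof (intro product_prob_space.intro product_sigma_finite.intro product_prob_space_axioms.intro)
  show "sigma_finite_measure NN" for i
    by (rule prob_space_imp_sigma_finite[OF NN_prob])
  show "prob_space NN" for i by (rule NN_prob)
qed

lemma M_prob: "prob_space (tau_measure s d)"
  unfolding tau_measure_def by (rule prob_space_PiM) (rule NN_prob)

lemma M_comp[measurable]: "j \<in> {s..<d} \<Longrightarrow> (\<lambda>\<tau>. \<tau> j) \<in> borel_measurable (tau_measure s d)"
  unfolding tau_measure_def
  by (rule measurable_compose[OF measurable_component_singleton[of j "{s..<d}" "\<lambda>_. NN"] NN_meas])

definition gd :: "nat \<Rightarrow> nat \<Rightarrow> (nat \<Rightarrow> real) \<Rightarrow> bool" where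
  "gd s d \<tau> = (\<forall>j\<in>{s..<d}. 1/2 \<le> \<tau> j \<and> \<tau> j \<le> 1)"

lemma M_AE: "AE \<tau> in tau_measure s d. gd s d \<tau>"
proof -
  interpret product_prob_space "\<lambda>_. NN" "{s..<d}" by (rule PPS)
  show ?thesis unfolding gd_def tau_measure_def
  proof (intro AE_finite_allI)
    fix j assume "j \<in> {s..<d}"
    then show "AE x in PiM {s..<d} (\<lambda>_. NN). 1/2 \<le> x j \<and> x j \<le> 1"
      by (rule AE_component) (rule NN_AE)
  qed simp
qed

lemma M_int_bd:
  fixes g :: "(nat \<Rightarrow> real) \<Rightarrow> real"
  assumes gm: "g \<in> borel_measurable (tau_measure s d)"
  and bd: "\<And>\<tau>. gd s d \<tau> \<Longrightarrow> \<bar>g \<tau>\<bar> \<le> B"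
  shows "integrable (tau_measure s d) g"
proof -
  interpret prob_space "tau_measure s d" by (rule M_prob)
  have a: "AE x in tau_measure s d. norm (g x) \<le> B"
    using M_AE by eventually_elim (use bd in auto)
  show ?thesis by (rule integrable_const_bound[OF a gm])
qed

lemma NN_int_if: "integrable NN f \<Longrightarrow> integrable NN g \<Longrightarrow> integrable NN (\<lambda>t. if P then f t else g t)"
  by (cases P) auto

lemma integral_if_const: "integral\<^sup>L N (\<lambda>t. if P then f t else g t) = (if P then integral\<^sup>L N f else integral\<^sup>L N g)"
  by (cases P) auto

lemma NN_int1: "integrable NN (\<lambda>t. 1::real)"
  by (rule NN_int_bd[where B=1]) auto
lemma NN_int_id: "integrable NN (\<lambda>t. t)"
  by (rule NN_int_bd[where B=1]) auto
lemma NN_int_sq: "integrable NN (\<lambda>t. t * t)"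
  by (rule NN_int_bd[where B=1]) (auto intro: mult_le_one)

lemma NN_one: "(\<integral>t. 1 \<partial>NN) = (1::real)"
proof -
  interpret prob_space NN by (rule NN_prob)
  show ?thesis by (simp add: prob_space)
qed

lemma M_mom1: assumes "j \<in> {s..<d}" shows "(\<integral>\<tau>. \<tau> j \<partial>tau_measure s d) = 3/4"
proof -
  interpret product_sigma_finite "\<lambda>_. NN"
    using PPS unfolding product_prob_space_def by blast
  define f where "f i = (\<lambda>t::real. if i = j then t else 1)" for i
  have "(\<integral>\<tau>. (\<Prod>i\<in>{s..<d}. f i (\<tau> i)) \<partial>PiM {s..<d} (\<lambda>_. NN)) = (\<Prod>i\<in>{s..<d}. integral\<^sup>L NN (f i))"
    by (rule product_integral_prod) (auto simp: f_def intro!: NN_int_if NN_int1 NN_int_id)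
  moreover have "(\<Prod>i\<in>{s..<d}. f i (\<tau> i)) = \<tau> j" for \<tau>
    using assms by (simp add: f_def prod.delta cong: if_cong)
  moreover have "(\<Prod>i\<in>{s..<d}. integral\<^sup>L NN (f i)) = 3/4"
    using assms by (simp add: f_def integral_if_const prod.delta NN_mom1 NN_one cong: if_cong)
  ultimately show ?thesis by (simp add: tau_measure_def)
qed

lemma M_mom2: assumes "j \<in> {s..<d}" "l \<in> {s..<d}"
  shows "(\<integral>\<tau>. \<tau> j * \<tau> l \<partial>tau_measure s d) = (if j = l then 7/12 else 9/16)"
proof -
  interpret product_sigma_finite "\<lambda>_. NN"
    using PPS unfolding product_prob_space_def by blast
  show ?thesis
  proof (cases "j = l")
    case True
    define f where "f i = (\<lambda>t::real. if i = j then t * t else 1)" for i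
    have "(\<integral>\<tau>. (\<Prod>i\<in>{s..<d}. f i (\<tau> i)) \<partial>PiM {s..<d} (\<lambda>_. NN)) = (\<Prod>i\<in>{s..<d}. integral\<^sup>L NN (f i))"
      by (rule product_integral_prod) (auto simp: f_def intro!: NN_int_if NN_int1 NN_int_sq)
    moreover have "(\<Prod>i\<in>{s..<d}. f i (\<tau> i)) = \<tau> j * \<tau> j" for \<tau>
      using assms by (simp add: f_def prod.delta cong: if_cong)
    moreover have "(\<Prod>i\<in>{s..<d}. integral\<^sup>L NN (f i)) = 7/12"
      using assms by (simp add: f_def integral_if_const prod.delta NN_mom2 NN_one cong: if_cong)
    ultimately show ?thesis using True by (simp add: tau_measure_def)
  next
    case False
    define f where "f i = (\<lambda>t::real. if i = j \<or> i = l then t else 1)" for i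
    have "(\<integral>\<tau>. (\<Prod>i\<in>{s..<d}. f i (\<tau> i)) \<partial>PiM {s..<d} (\<lambda>_. NN)) = (\<Prod>i\<in>{s..<d}. integral\<^sup>L NN (f i))"
      by (rule product_integral_prod) (auto simp: f_def intro!: NN_int_if NN_int1 NN_int_id)
    moreover have "(\<Prod>i\<in>{s..<d}. g i) = g j * g l" if "\<forall>i\<in>{s..<d}-{j,l}. g i = 1" for g :: "nat \<Rightarrow> real"
    proof -
      have "(\<Prod>i\<in>{s..<d}. g i) = (\<Prod>i\<in>{j,l}. g i)"
        using that assms by (intro prod.mono_neutral_right) auto
      then show ?thesis using False by simp
    qed
    ultimately have "(\<integral>\<tau>. \<tau> j * \<tau> l \<partial>PiM {s..<d} (\<lambda>_. NN)) = (3/4) * (3/4)"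
      using False by (simp add: f_def NN_mom1)
    then show ?thesis using False by (simp add: tau_measure_def)
  qed
qed


lemma gd_meas: "Measurable.pred (tau_measure s d) (gd s d)"
  unfolding gd_def by measurable

lemma pair_AE: "AE p in tau_measure s d \<Otimes>\<^sub>M tau_measure s d. gd s d (fst p) \<and> gd s d (snd p)"
proof -
  interpret prob_space "tau_measure s d" by (rule M_prob)
  interpret pair_sigma_finite "tau_measure s d" "tau_measure s d" ..
  have "{x \<in> space (tau_measure s d \<Otimes>\<^sub>M tau_measure s d). gd s d (fst x) \<and> gd s d (snd x)}
      \<in> sets (tau_measure s d \<Otimes>\<^sub>M tau_measure s d)"
    using gd_meas by measurable
  moreover have "AE x in tau_measure s d. AE y in tau_measure s d. gd s d x \<and> gd s d y"
    using M_AE by eventually_elim (use M_AE in auto)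
  ultimately show ?thesis by (subst AE_pair_iff[symmetric]) auto
qed


lemma pair_int_bd:
  fixes g :: "(nat \<Rightarrow> real) \<times> (nat \<Rightarrow> real) \<Rightarrow> real"
  assumes gm: "g \<in> borel_measurable (tau_measure s d \<Otimes>\<^sub>M tau_measure s d)"
  and bd: "\<And>p. gd s d (fst p) \<Longrightarrow> gd s d (snd p) \<Longrightarrow> \<bar>g p\<bar> \<le> B"
  shows "integrable (tau_measure s d \<Otimes>\<^sub>M tau_measure s d) g"
proof -
  interpret prob_space "tau_measure s d" by (rule M_prob)
  interpret pair_prob_space "tau_measure s d" "tau_measure s d" ..
  have a: "AE x in tau_measure s d \<Otimes>\<^sub>M tau_measure s d. norm (g x) \<le> B"
    using pair_AE by eventually_elim (use bd in auto)
  show ?thesis by (rule integrable_const_bound[OF a gm])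
qed

definition Af :: "nat \<Rightarrow> nat \<Rightarrow> (nat \<Rightarrow> real) \<Rightarrow> (nat \<Rightarrow> real) \<Rightarrow> real" where
  "Af s d c \<tau> = (\<Sum>j\<in>{s..<d}. c j * \<tau> j)"

lemma Af_meas[measurable]: "Af s d c \<in> borel_measurable (tau_measure s d)"
  unfolding Af_def by measurable

lemma Af_bd: "gd s d \<tau> \<Longrightarrow> \<bar>Af s d c \<tau>\<bar> \<le> (\<Sum>j\<in>{s..<d}. \<bar>c j\<bar>)"
  unfolding Af_def gd_def
proof -
  assume g: "\<forall>j\<in>{s..<d}. 1 / 2 \<le> \<tau> j \<and> \<tau> j \<le> 1"
  have "\<bar>\<Sum>j\<in>{s..<d}. c j * \<tau> j\<bar> \<le> (\<Sum>j\<in>{s..<d}. \<bar>c j * \<tau> j\<bar>)" by (rule sum_abs)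
  also have "\<dots> \<le> (\<Sum>j\<in>{s..<d}. \<bar>c j\<bar>)"
  proof (rule sum_mono)
    fix j assume "j \<in> {s..<d}"
    then have "1/2 \<le> \<tau> j" "\<tau> j \<le> 1" using g by auto
    then have "\<bar>\<tau> j\<bar> \<le> 1" by simp
    then show "\<bar>c j * \<tau> j\<bar> \<le> \<bar>c j\<bar>" by (simp add: abs_mult mult_left_le)
  qed
  finally show "\<bar>\<Sum>j\<in>{s..<d}. c j * \<tau> j\<bar> \<le> (\<Sum>j\<in>{s..<d}. \<bar>c j\<bar>)" .
qed

lemma Af_int: "integrable (tau_measure s d) (Af s d c)"
  by (rule M_int_bd[OF Af_meas Af_bd])

lemma Af_int2: "integrable (tau_measure s d) (\<lambda>\<tau>. Af s d c \<tau> * Af s d c \<tau>)"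
proof (rule M_int_bd)
  fix \<tau> assume "gd s d \<tau>"
  then have "\<bar>Af s d c \<tau>\<bar> \<le> (\<Sum>j\<in>{s..<d}. \<bar>c j\<bar>)" by (rule Af_bd)
  then have "\<bar>Af s d c \<tau>\<bar> * \<bar>Af s d c \<tau>\<bar> \<le> (\<Sum>j\<in>{s..<d}. \<bar>c j\<bar>) * (\<Sum>j\<in>{s..<d}. \<bar>c j\<bar>)"
    by (intro mult_mono) auto
  then show "\<bar>Af s d c \<tau> * Af s d c \<tau>\<bar> \<le> (\<Sum>j\<in>{s..<d}. \<bar>c j\<bar>) * (\<Sum>j\<in>{s..<d}. \<bar>c j\<bar>)"
    by (simp only: abs_mult)
qed measurable

lemma Af_mean: "(\<integral>\<tau>. Af s d c \<tau> \<partial>tau_measure s d) = 3/4 * (\<Sum>j\<in>{s..<d}. c j)"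
proof -
  have "(\<integral>\<tau>. Af s d c \<tau> \<partial>tau_measure s d) = (\<Sum>j\<in>{s..<d}. \<integral>\<tau>. c j * \<tau> j \<partial>tau_measure s d)"
    unfolding Af_def
  proof (rule Bochner_Integration.integral_sum)
    fix j assume j: "j \<in> {s..<d}"
    show "integrable (tau_measure s d) (\<lambda>\<tau>. c j * \<tau> j)"
    proof (rule M_int_bd[where B="\<bar>c j\<bar>"])
      show "(\<lambda>\<tau>. c j * \<tau> j) \<in> borel_measurable (tau_measure s d)" using j by measurable
      fix \<tau> assume "gd s d \<tau>"
      then have "1/2 \<le> \<tau> j" "\<tau> j \<le> 1" using j by (auto simp: gd_def)
      then have "\<bar>\<tau> j\<bar> \<le> 1" by simp
      then show "\<bar>c j * \<tau> j\<bar> \<le> \<bar>c j\<bar>" by (simp add: abs_mult mult_left_le)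
    qed
  qed
  also have "\<dots> = (\<Sum>j\<in>{s..<d}. c j * (3/4))"
    by (intro sum.cong refl) (simp add: M_mom1)
  also have "\<dots> = 3/4 * (\<Sum>j\<in>{s..<d}. c j)"
    by (simp only: sum_distrib_right mult.commute)
  finally show ?thesis .
qed




lemma gd_abs: "gd s d \<tau> \<Longrightarrow> j \<in> {s..<d} \<Longrightarrow> \<bar>\<tau> j\<bar> \<le> 1"
  unfolding gd_def by (drule bspec) auto

lemma tt_int: "j \<in> {s..<d} \<Longrightarrow> l \<in> {s..<d} \<Longrightarrow> integrable (tau_measure s d) (\<lambda>\<tau>. a * (\<tau> j * \<tau> l))"
proof (rule M_int_bd[where B="\<bar>a\<bar>"])
  fix \<tau> assume "j \<in> {s..<d}" "l \<in> {s..<d}" "gd s d \<tau>"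
  then have "\<bar>\<tau> j\<bar> \<le> 1" "\<bar>\<tau> l\<bar> \<le> 1" by (auto intro: gd_abs)
  then have "\<bar>\<tau> j * \<tau> l\<bar> \<le> 1" by (simp add: abs_mult mult_le_one)
  then show "\<bar>a * (\<tau> j * \<tau> l)\<bar> \<le> \<bar>a\<bar>" by (simp add: abs_mult mult_left_le)
qed measurable

lemma Af_sq: "(\<integral>\<tau>. Af s d c \<tau> * Af s d c \<tau> \<partial>tau_measure s d)
   = 9/16 * (\<Sum>j\<in>{s..<d}. c j) * (\<Sum>j\<in>{s..<d}. c j) + (\<Sum>j\<in>{s..<d}. c j * c j) / 48"
proof -
  let ?S = "{s..<d}"
  have e: "Af s d c \<tau> * Af s d c \<tau> = (\<Sum>j\<in>?S. \<Sum>l\<in>?S. (c j * c l) * (\<tau> j * \<tau> l))" for \<tau>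
    unfolding Af_def sum_product by (intro sum.cong refl) (simp add: mult_ac)
  have "(\<integral>\<tau>. Af s d c \<tau> * Af s d c \<tau> \<partial>tau_measure s d)
      = (\<Sum>j\<in>?S. \<integral>\<tau>. (\<Sum>l\<in>?S. (c j * c l) * (\<tau> j * \<tau> l)) \<partial>tau_measure s d)"
    unfolding e by (rule Bochner_Integration.integral_sum) (auto intro!: integrable_sum tt_int)
  also have "\<dots> = (\<Sum>j\<in>?S. \<Sum>l\<in>?S. (c j * c l) * (if j = l then 7/12 else 9/16))"
  proof (intro sum.cong refl)
    fix j assume j: "j \<in> ?S"
    have "(\<integral>\<tau>. (\<Sum>l\<in>?S. (c j * c l) * (\<tau> j * \<tau> l)) \<partial>tau_measure s d)
        = (\<Sum>l\<in>?S. \<integral>\<tau>. (c j * c l) * (\<tau> j * \<tau> l) \<partial>tau_measure s d)"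
      by (rule Bochner_Integration.integral_sum) (rule tt_int[OF j], simp)
    also have "\<dots> = (\<Sum>l\<in>?S. (c j * c l) * (if j = l then 7/12 else 9/16))"
    proof (intro sum.cong refl)
      fix l assume l: "l \<in> ?S"
      show "(\<integral>\<tau>. (c j * c l) * (\<tau> j * \<tau> l) \<partial>tau_measure s d) = (c j * c l) * (if j = l then 7/12 else 9/16)"
        using M_mom2[OF j l] by simp
    qed
    finally show "(\<integral>\<tau>. (\<Sum>l\<in>?S. (c j * c l) * (\<tau> j * \<tau> l)) \<partial>tau_measure s d)
        = (\<Sum>l\<in>?S. (c j * c l) * (if j = l then 7/12 else 9/16))" .
  qed
  also have "\<dots> = (\<Sum>j\<in>?S. (\<Sum>l\<in>?S. 9/16 * (c j * c l)) + c j * c j / 48)"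
  proof (intro sum.cong refl)
    fix j assume j: "j \<in> ?S"
    have "(\<Sum>l\<in>?S. (c j * c l) * (if j = l then 7/12 else 9/16))
       = (\<Sum>l\<in>?S. 9/16 * (c j * c l) + (if j = l then c j * c l / 48 else 0))"
      by (intro sum.cong refl) auto
    also have "\<dots> = (\<Sum>l\<in>?S. 9/16 * (c j * c l)) + c j * c j / 48"
      using j by (simp add: sum.distrib)
    finally show "(\<Sum>l\<in>?S. (c j * c l) * (if j = l then 7/12 else 9/16))
       = (\<Sum>l\<in>?S. 9/16 * (c j * c l)) + c j * c j / 48" .
  qed
  also have "\<dots> = 9/16 * (\<Sum>j\<in>?S. c j) * (\<Sum>j\<in>?S. c j) + (\<Sum>j\<in>?S. c j * c j) / 48"
  proof -
    have "(\<Sum>j\<in>?S. \<Sum>l\<in>?S. 9/16 * (c j * c l)) = 9/16 * ((\<Sum>j\<in>?S. c j) * (\<Sum>j\<in>?S. c j))"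
    proof -
      have "(\<Sum>j\<in>?S. c j) * (\<Sum>j\<in>?S. c j) = (\<Sum>j\<in>?S. \<Sum>l\<in>?S. c j * c l)"
        by (rule sum_product)
      then show ?thesis by (simp add: sum_distrib_left)
    qed
    then show ?thesis by (simp add: sum.distrib sum_divide_distrib)
  qed
  finally show ?thesis .
qed


lemma Af_inner: "(\<integral>y. (a - Af s d c y)\<^sup>2 \<partial>tau_measure s d)
   = a * a - 2 * a * (3/4 * (\<Sum>j\<in>{s..<d}. c j))
     + (9/16 * (\<Sum>j\<in>{s..<d}. c j) * (\<Sum>j\<in>{s..<d}. c j) + (\<Sum>j\<in>{s..<d}. c j * c j) / 48)"
proof -
  interpret prob_space "tau_measure s d" by (rule M_prob)
  have e: "(a - Af s d c y)\<^sup>2 = (a * a - (2 * a) * Af s d c y) + Af s d c y * Af s d c y" for y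
    by (simp add: power2_eq_square algebra_simps)
  have i1: "integrable (tau_measure s d) (\<lambda>y. a * a - (2 * a) * Af s d c y)"
    using Af_int by auto
  have "(\<integral>y. (a - Af s d c y)\<^sup>2 \<partial>tau_measure s d)
      = (\<integral>y. a * a - (2 * a) * Af s d c y \<partial>tau_measure s d) + (\<integral>y. Af s d c y * Af s d c y \<partial>tau_measure s d)"
    unfolding e by (rule Bochner_Integration.integral_add[OF i1 Af_int2])
  also have "(\<integral>y. a * a - (2 * a) * Af s d c y \<partial>tau_measure s d) = a * a - (2 * a) * (\<integral>y. Af s d c y \<partial>tau_measure s d)"
    using Af_int by (simp add: prob_space)
  finally show ?thesis by (simp add: Af_sq Af_mean)
qed

lemma K: "(\<integral>p. (Af s d c (fst p) - Af s d c (snd p))\<^sup>2 \<partial>(tau_measure s d \<Otimes>\<^sub>M tau_measure s d))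
   = (\<Sum>j\<in>{s..<d}. c j * c j) / 24"
proof -
  interpret prob_space "tau_measure s d" by (rule M_prob)
  interpret pair_prob_space "tau_measure s d" "tau_measure s d" ..
  let ?B = "(\<Sum>j\<in>{s..<d}. \<bar>c j\<bar>)"
  let ?m = "3/4 * (\<Sum>j\<in>{s..<d}. c j)"
  let ?q = "9/16 * (\<Sum>j\<in>{s..<d}. c j) * (\<Sum>j\<in>{s..<d}. c j) + (\<Sum>j\<in>{s..<d}. c j * c j) / 48"
  have int: "integrable (tau_measure s d \<Otimes>\<^sub>M tau_measure s d) (\<lambda>p. (Af s d c (fst p) - Af s d c (snd p))\<^sup>2)"
  proof (rule pair_int_bd[where B="(2 * ?B)\<^sup>2"])
    fix p :: "(nat \<Rightarrow> real) \<times> (nat \<Rightarrow> real)"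
    assume "gd s d (fst p)" "gd s d (snd p)"
    then have "\<bar>Af s d c (fst p)\<bar> \<le> ?B" "\<bar>Af s d c (snd p)\<bar> \<le> ?B" by (auto intro: Af_bd)
    then have "\<bar>Af s d c (fst p) - Af s d c (snd p)\<bar> \<le> 2 * ?B" by linarith
    then have "\<bar>Af s d c (fst p) - Af s d c (snd p)\<bar>\<^sup>2 \<le> (2 * ?B)\<^sup>2"
      by (intro power_mono) auto
    then show "\<bar>(Af s d c (fst p) - Af s d c (snd p))\<^sup>2\<bar> \<le> (2 * ?B)\<^sup>2"
      by simp
  qed measurable
  have "(\<integral>p. (Af s d c (fst p) - Af s d c (snd p))\<^sup>2 \<partial>(tau_measure s d \<Otimes>\<^sub>M tau_measure s d))
     = (\<integral>x. (\<integral>y. (Af s d c x - Af s d c y)\<^sup>2 \<partial>tau_measure s d) \<partial>tau_measure s d)"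
    using integral_fst'[OF int] by simp
  also have "\<dots> = (\<integral>x. Af s d c x * Af s d c x - 2 * ?m * Af s d c x + ?q \<partial>tau_measure s d)"
    by (intro Bochner_Integration.integral_cong refl) (simp add: Af_inner algebra_simps)
  also have "\<dots> = ?q - 2 * ?m * ?m + ?q"
    using Af_int Af_int2 by (simp add: Af_mean Af_sq prob_space.prob_space[OF M_prob])
  also have "\<dots> = (\<Sum>j\<in>{s..<d}. c j * c j) / 24"
    by (simp add: algebra_simps)
  finally show ?thesis .
qed



definition chi :: "nat set \<Rightarrow> (nat \<Rightarrow> real) \<Rightarrow> real" where
  "chi T xb = (\<Prod>j\<in>T. xb j)"

lemma cube_sum_prod:
  fixes g :: "nat \<Rightarrow> real \<Rightarrow> real"
  shows "(\<Sum>xb\<in>cube d. \<Prod>j<d. g j (xb j)) = (\<Prod>j<d. g j 1 + g j (-1))"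
proof -
  have "(\<Prod>j<d. g j 1 + g j (-1)) = (\<Prod>j<d. \<Sum>y\<in>{-1,1::real}. g j y)"
    by (intro prod.cong refl) (simp add: add.commute)
  also have "\<dots> = (\<Sum>xb\<in>PiE {..<d} (\<lambda>_. {-1,1::real}). \<Prod>j<d. g j (xb j))"
    using prod_sum_PiE[of "{..<d}" "\<lambda>_. {-1,1::real}" g] by simp
  finally show ?thesis by (simp add: cube_def)
qed

lemma chi_expand: "T \<subseteq> {..<d} \<Longrightarrow> chi T xb = (\<Prod>j<d. if j \<in> T then xb j else 1)"
proof -
  assume T: "T \<subseteq> {..<d}"
  have "(\<Prod>j<d. if j \<in> T then xb j else 1) = (\<Prod>j\<in>T. if j \<in> T then xb j else 1)"
    using T by (intro prod.mono_neutral_right) auto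
  also have "\<dots> = chi T xb" unfolding chi_def by (intro prod.cong refl) auto
  finally show ?thesis by simp
qed

lemma orth:
  assumes "T \<subseteq> {..<d}" "T' \<subseteq> {..<d}"
  shows "(\<Sum>xb\<in>cube d. chi T xb * chi T' xb) = (if T = T' then 2 ^ d else 0)"
proof -
  define g where "g j y = (if j \<in> T then y else 1) * (if j \<in> T' then y else (1::real))" for j y
  have "(\<Sum>xb\<in>cube d. chi T xb * chi T' xb) = (\<Sum>xb\<in>cube d. \<Prod>j<d. g j (xb j))"
    using assms by (intro sum.cong refl) (simp add: chi_expand[of _ d] g_def prod.distrib)
  also have "\<dots> = (\<Prod>j<d. g j 1 + g j (-1))" by (rule cube_sum_prod)
  also have "\<dots> = (\<Prod>j<d. if (j \<in> T) = (j \<in> T') then 2 else 0)"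
    by (intro prod.cong refl) (auto simp: g_def)
  also have "\<dots> = (if T = T' then 2 ^ d else 0)"
  proof (cases "T = T'")
    case True then show ?thesis by simp
  next
    case False
    then obtain j where "(j \<in> T) \<noteq> (j \<in> T')" by blast
    moreover then have "j < d" using assms by auto
    ultimately show ?thesis using False
      by (intro trans[OF prod_zero]) auto
  qed
  finally show ?thesis .
qed

lemma cube_val: "xb \<in> cube d \<Longrightarrow> j < d \<Longrightarrow> xb j = -1 \<or> xb j = 1"
  unfolding cube_def by (auto simp: PiE_iff)

lemma cube_sgn: "xb \<in> cube d \<Longrightarrow> j < d \<Longrightarrow> sgn (xb j) = xb j"
  using cube_val[of xb d j] by auto

lemma cube_sq: "xb \<in> cube d \<Longrightarrow> j < d \<Longrightarrow> xb j * xb j = 1"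
  using cube_val[of xb d j] by auto

lemma cube_pair: "j < d \<Longrightarrow> l < d \<Longrightarrow> (\<Sum>xb\<in>cube d. xb j * xb l) = (if j = l then 2 ^ d else 0)"
  using orth[of "{j}" d "{l}"] by (simp add: chi_def)

lemma cube_one: "(\<Sum>xb\<in>cube d. xb j) = (if j < d then 0 else (\<Sum>xb\<in>cube d. xb j))"
  using orth[of "{j}" d "{}"] by (simp add: chi_def)

lemma cube_card: "(\<Sum>xb\<in>cube d. (1::real)) = 2 ^ d"
  using orth[of "{}" d "{}"] by (simp add: chi_def)

lemma cube_fin: "finite (cube d)"
  unfolding cube_def by (rule finite_PiE) auto



lemma orth_swap:
  fixes U :: "nat \<Rightarrow> nat \<Rightarrow> real"
  assumes "\<And>a b. a < n \<Longrightarrow> b < n \<Longrightarrow> (\<Sum>j<n. U a j * U b j) = (if a = b then 1 else 0)"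
  and "i < n" "j < n"
  shows "(\<Sum>a<n. U a i * U a j) = (if i = j then 1 else 0)"
proof -
  define A where "A = mat n n (\<lambda>(a, j). U a j)"
  have A: "A \<in> carrier_mat n n" unfolding A_def by simp
  have At: "transpose_mat A \<in> carrier_mat n n" using A by simp
  have "A * transpose_mat A = 1\<^sub>m n"
  proof (rule eq_matI)
    fix a b assume ab: "a < dim_row (1\<^sub>m n)" "b < dim_col (1\<^sub>m n)"
    then show "(A * transpose_mat A) $$ (a, b) = 1\<^sub>m n $$ (a, b)"
      using assms(1)[of a b] A
      by (simp add: A_def scalar_prod_def atLeast0LessThan)
  qed (use A in auto)
  then have "transpose_mat A * A = 1\<^sub>m n" by (rule mat_mult_left_right_inverse[OF A At])
  then have "(transpose_mat A * A) $$ (i, j) = 1\<^sub>m n $$ (i, j)" by simp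
  then show ?thesis using assms(2,3) A by (simp add: A_def scalar_prod_def atLeast0LessThan)
qed

lemma M_const: "(\<integral>\<tau>. c \<partial>tau_measure s d) = (c::real)"
  using prob_space.prob_space[OF M_prob, of s d] by (simp add: measure_def)

lemma E_pos_nonneg: "(\<And>x y. 0 \<le> g x y) \<Longrightarrow> 0 \<le> E_pos s d g"
  unfolding E_pos_def
  by (intro divide_nonneg_pos sum_nonneg Bochner_Integration.integral_nonneg) auto

lemma E_data_const:
  assumes "\<And>xb \<tau>. xb \<in> cube d \<Longrightarrow> g (aug s d xb \<tau>) = h xb"
  shows "E_data s d g = (\<Sum>xb\<in>cube d. h xb) / 2 ^ d"
  unfolding E_data_def
  by (intro arg_cong2[where f="(/)"] sum.cong refl) (simp del: lebesgue_integral_const add: assms M_const)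

lemma loss_nonneg: "0 \<le> lam \<Longrightarrow> 0 \<le> loss s d k lam f"
  unfolding loss_def
  by (intro add_nonneg_nonneg E_pos_nonneg mult_nonneg_nonneg sum_nonneg) auto

lemma loss_zero:
  assumes "0 < lam" "loss s d k lam f = 0"
  shows "E_pos s d (\<lambda>x x'. \<Sum>j<k. (f x j - f x' j)\<^sup>2) = 0"
    and "\<And>a b. a < k \<Longrightarrow> b < k \<Longrightarrow> E_data s d (\<lambda>x. f x a * f x b) = (if a = b then 1 else 0)"
proof -
  let ?P = "E_pos s d (\<lambda>x x'. \<Sum>j<k. (f x j - f x' j)\<^sup>2)"
  let ?F = "(\<Sum>a<k. \<Sum>b<k. (E_data s d (\<lambda>x. f x a * f x b) - (if a = b then 1 else 0))\<^sup>2)"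
  have p: "0 \<le> ?P" by (intro E_pos_nonneg sum_nonneg) auto
  have q: "0 \<le> ?F" by (intro sum_nonneg) auto
  have e: "?P + lam * ?F = 0" using assms(2) by (simp add: loss_def)
  have lf: "0 \<le> lam * ?F" using assms(1) q by simp
  show "?P = 0" using p lf e by linarith
  have "lam * ?F = 0" using p lf e by linarith
  then have F0: "?F = 0" using assms(1) by simp
  fix a b assume ab: "a < k" "b < k"
  have "\<forall>a\<in>{..<k}. (\<Sum>b<k. (E_data s d (\<lambda>x. f x a * f x b) - (if a = b then 1 else 0))\<^sup>2) = 0"
    using F0 by (subst sum_nonneg_eq_0_iff[symmetric]) (auto intro: sum_nonneg)
  then have "(\<Sum>b<k. (E_data s d (\<lambda>x. f x a * f x b) - (if a = b then 1 else 0))\<^sup>2) = 0" using ab by auto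
  then have "\<forall>b\<in>{..<k}. (E_data s d (\<lambda>x. f x a * f x b) - (if a = b then 1 else 0))\<^sup>2 = 0"
    by (subst sum_nonneg_eq_0_iff[symmetric]) auto
  then have "(E_data s d (\<lambda>x. f x a * f x b) - (if a = b then 1 else 0))\<^sup>2 = 0" using ab by blast
  then show "E_data s d (\<lambda>x. f x a * f x b) = (if a = b then 1 else 0)" by simp
qed

lemma E_pos_zero:
  assumes "\<And>x y. 0 \<le> g x y" "E_pos s d g = 0" "xb \<in> cube d"
  shows "(\<integral>p. g (aug s d xb (fst p)) (aug s d xb (snd p)) \<partial>(tau_measure s d \<Otimes>\<^sub>M tau_measure s d)) = 0"
proof -
  let ?I = "\<lambda>xb. (\<integral>p. g (aug s d xb (fst p)) (aug s d xb (snd p)) \<partial>(tau_measure s d \<Otimes>\<^sub>M tau_measure s d))"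
  have "(\<Sum>xb\<in>cube d. ?I xb) = 0" using assms(2) by (simp add: E_pos_def)
  moreover have "\<forall>xb\<in>cube d. 0 \<le> ?I xb"
  proof
    fix xb show "0 \<le> ?I xb" by (rule Bochner_Integration.integral_nonneg) (rule assms(1))
  qed
  ultimately have "\<forall>xb\<in>cube d. ?I xb = 0"
    using sum_nonneg_eq_0_iff[OF cube_fin, where f="?I"] by simp
  then show ?thesis using assms(3) by blast
qed

lemma sum_split_s: fixes s d :: nat shows "s \<le> d \<Longrightarrow> (\<Sum>j<d. g j) = (\<Sum>j<s. g j) + (\<Sum>j\<in>{s..<d}. g j)"
proof -
  assume sd: "s \<le> d"
  show ?thesis using sum.atLeastLessThan_concat[of 0 s d g] sd by (simp add: atLeast0LessThan)
qed

lemma lin_aug: "s \<le> d \<Longrightarrow>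
  (\<Sum>j<d. U a j * aug s d xb \<tau> j) = (\<Sum>j<s. U a j * xb j) + Af s d (\<lambda>j. U a j * xb j) \<tau>"
proof -
  assume sd: "s \<le> d"
  have a: "(\<Sum>j<s. U a j * aug s d xb \<tau> j) = (\<Sum>j<s. U a j * xb j)"
    by (intro sum.cong refl) (simp add: aug_def)
  have b: "(\<Sum>j\<in>{s..<d}. U a j * aug s d xb \<tau> j) = (\<Sum>j\<in>{s..<d}. (U a j * xb j) * \<tau> j)"
    by (intro sum.cong refl) (simp add: aug_def)
  show ?thesis unfolding Af_def sum_split_s[OF sd] a b ..
qed

lemma K_int: "integrable (tau_measure s d \<Otimes>\<^sub>M tau_measure s d) (\<lambda>p. (Af s d c (fst p) - Af s d c (snd p))\<^sup>2)"
proof -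
  let ?B = "(\<Sum>j\<in>{s..<d}. \<bar>c j\<bar>)"
  show ?thesis
  proof (rule pair_int_bd[where B="(2 * ?B)\<^sup>2"])
    fix p :: "(nat \<Rightarrow> real) \<times> (nat \<Rightarrow> real)"
    assume "gd s d (fst p)" "gd s d (snd p)"
    then have "\<bar>Af s d c (fst p)\<bar> \<le> ?B" "\<bar>Af s d c (snd p)\<bar> \<le> ?B" by (auto intro: Af_bd)
    then have "\<bar>Af s d c (fst p) - Af s d c (snd p)\<bar> \<le> 2 * ?B" by linarith
    then have "\<bar>Af s d c (fst p) - Af s d c (snd p)\<bar>\<^sup>2 \<le> (2 * ?B)\<^sup>2"
      by (intro power_mono) auto
    then show "\<bar>(Af s d c (fst p) - Af s d c (snd p))\<^sup>2\<bar> \<le> (2 * ?B)\<^sup>2"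
      by simp
  qed measurable
qed



lemma gram_cube:
  fixes u v :: "nat \<Rightarrow> real"
  assumes "s \<le> d"
  shows "(\<Sum>xb\<in>cube d. (\<Sum>j<s. u j * xb j) * (\<Sum>l<s. v l * xb l)) = 2 ^ d * (\<Sum>j<s. u j * v j)"
proof -
  have "(\<Sum>xb\<in>cube d. (\<Sum>j<s. u j * xb j) * (\<Sum>l<s. v l * xb l))
      = (\<Sum>xb\<in>cube d. \<Sum>j<s. \<Sum>l<s. (u j * v l) * (xb j * xb l))"
    by (intro sum.cong refl) (simp add: sum_product mult_ac)
  also have "\<dots> = (\<Sum>j<s. \<Sum>l<s. \<Sum>xb\<in>cube d. (u j * v l) * (xb j * xb l))"
    by (rule trans[OF sum.swap], intro sum.cong refl, rule sum.swap)
  also have "\<dots> = (\<Sum>j<s. \<Sum>l<s. (u j * v l) * (if j = l then 2 ^ d else 0))"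
  proof (intro sum.cong refl)
    fix j l assume "j \<in> {..<s}" "l \<in> {..<s}"
    then have "j < d" "l < d" using assms by auto
    then show "(\<Sum>xb\<in>cube d. (u j * v l) * (xb j * xb l)) = (u j * v l) * (if j = l then 2 ^ d else 0)"
      by (simp add: sum_distrib_left[symmetric] cube_pair)
  qed
  also have "\<dots> = (\<Sum>j<s. 2 ^ d * (u j * v j))"
    by (intro sum.cong refl) (simp add: if_distrib sum.delta cong: if_cong)
  also have "\<dots> = 2 ^ d * (\<Sum>j<s. u j * v j)" by (simp add: sum_distrib_left)
  finally show ?thesis .
qed


lemma part1:
  assumes sd: "s \<le> d" and i: "i < s" and lam: "0 < lam"
    and am: "is_argmin (loss s d s lam) (F_linear d) f"
  shows "\<exists>w. downstream_err s d s i f w = 0"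
proof -
  from am have fF: "f \<in> F_linear d" and minf: "\<forall>g\<in>F_linear d. loss s d s lam f \<le> loss s d s lam g"
    by (auto simp: is_argmin_def)
  obtain U where fU: "f = (\<lambda>x a. \<Sum>j<d. U a j * x j)" using fF unfolding F_linear_def by blast
  define f0 where "f0 = (\<lambda>(x::nat\<Rightarrow>real) a. \<Sum>j<d. (if a = j then 1 else 0) * x j)"
  have f0F: "f0 \<in> F_linear d" unfolding F_linear_def f0_def
    by (rule CollectI, rule exI[where x="\<lambda>a j. if a = j then 1 else 0"]) (rule refl)
  have f0v: "f0 (aug s d xb \<tau>) a = xb a" if "a < s" for xb \<tau> a
  proof -
    have "f0 (aug s d xb \<tau>) a = (\<Sum>j<d. if a = j then aug s d xb \<tau> j else 0)"
      unfolding f0_def by (intro sum.cong) auto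
    also have "\<dots> = aug s d xb \<tau> a" using that sd by (simp add: sum.delta)
    also have "\<dots> = xb a" using that by (simp add: aug_def)
    finally show ?thesis .
  qed
  have loss0: "loss s d s lam f0 = 0"
  proof -
    have z: "(\<Sum>j<s. (f0 (aug s d xb x) j - f0 (aug s d xb y) j)\<^sup>2) = 0" for xb x y
      by (intro sum.neutral) (simp add: f0v)
    have P: "E_pos s d (\<lambda>x x'. \<Sum>j<s. (f0 x j - f0 x' j)\<^sup>2) = 0"
      unfolding E_pos_def by (simp add: z)
    have D: "E_data s d (\<lambda>x. f0 x a * f0 x b) = (if a = b then 1 else 0)" if ab: "a < s" "b < s" for a b
    proof -
      have "E_data s d (\<lambda>x. f0 x a * f0 x b) = (\<Sum>xb\<in>cube d. xb a * xb b) / 2 ^ d"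
        by (rule E_data_const) (simp add: f0v ab)
      also have "\<dots> = (if a = b then 1 else 0)" using ab sd by (simp add: cube_pair)
      finally show ?thesis .
    qed
    show ?thesis unfolding loss_def using P D by simp
  qed
  have lf: "loss s d s lam f = 0"
    using minf f0F loss0 loss_nonneg[of lam s d s f] lam by force
  note Z = loss_zero[OF lam lf]
  define xb0 where "xb0 = restrict (\<lambda>_. 1::real) {..<d}"
  have xb0: "xb0 \<in> cube d" by (simp add: xb0_def cube_def)
  define c where "c a j = U a j * xb0 j" for a j
  have I0: "(\<integral>p. (\<Sum>j<s. (f (aug s d xb0 (fst p)) j - f (aug s d xb0 (snd p)) j)\<^sup>2)
      \<partial>(tau_measure s d \<Otimes>\<^sub>M tau_measure s d)) = 0"
    by (rule E_pos_zero[OF _ Z(1) xb0]) (intro sum_nonneg, auto)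
  have pw: "(\<Sum>j<s. (f (aug s d xb0 x) j - f (aug s d xb0 y) j)\<^sup>2)
      = (\<Sum>a<s. (Af s d (c a) x - Af s d (c a) y)\<^sup>2)" for x y
    unfolding fU lin_aug[OF sd] c_def by simp
  have "(\<integral>p. (\<Sum>a<s. (Af s d (c a) (fst p) - Af s d (c a) (snd p))\<^sup>2) \<partial>(tau_measure s d \<Otimes>\<^sub>M tau_measure s d))
      = (\<Sum>a<s. \<integral>p. (Af s d (c a) (fst p) - Af s d (c a) (snd p))\<^sup>2 \<partial>(tau_measure s d \<Otimes>\<^sub>M tau_measure s d))"
    by (rule Bochner_Integration.integral_sum) (rule K_int)
  also have "\<dots> = (\<Sum>a<s. (\<Sum>j\<in>{s..<d}. c a j * c a j) / 24)"
    by (simp add: K)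
  finally have "(\<Sum>a<s. (\<Sum>j\<in>{s..<d}. c a j * c a j) / 24) = 0"
    using I0 pw by simp
  then have "\<forall>a\<in>{..<s}. (\<Sum>j\<in>{s..<d}. c a j * c a j) / 24 = 0"
    by (subst sum_nonneg_eq_0_iff[symmetric]) (auto intro!: sum_nonneg divide_nonneg_pos)
  then have A0: "\<forall>a\<in>{..<s}. (\<Sum>j\<in>{s..<d}. c a j * c a j) / 24 = 0" .
  have "\<forall>a\<in>{..<s}. \<forall>j\<in>{s..<d}. c a j * c a j = 0"
  proof (intro ballI)
    fix a j assume a: "a \<in> {..<s}" and j: "j \<in> {s..<d}"
    have "(\<Sum>j\<in>{s..<d}. c a j * c a j) = 0" using A0 a by simp
    then have "\<forall>j\<in>{s..<d}. c a j * c a j = 0"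
      using sum_nonneg_eq_0_iff[of "{s..<d}" "\<lambda>j. c a j * c a j"] by simp
    then show "c a j * c a j = 0" using j by blast
  qed
  then have UZ: "U a j = 0" if "a < s" "j \<in> {s..<d}" for a j
    using that by (auto simp: c_def xb0_def)
  have fv: "f (aug s d xb \<tau>) a = (\<Sum>j<s. U a j * xb j)" if "a < s" for xb \<tau> a
  proof -
    have "Af s d (\<lambda>j. U a j * xb j) \<tau> = 0" unfolding Af_def using UZ[OF that] by simp
    then show ?thesis unfolding fU lin_aug[OF sd] by simp
  qed
  have G: "(\<Sum>j<s. U a j * U b j) = (if a = b then 1 else 0)" if ab: "a < s" "b < s" for a b
  proof -
    have "E_data s d (\<lambda>x. f x a * f x b)
       = (\<Sum>xb\<in>cube d. (\<Sum>j<s. U a j * xb j) * (\<Sum>l<s. U b l * xb l)) / 2 ^ d"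
      by (rule E_data_const) (simp add: fv ab)
    also have "\<dots> = (\<Sum>j<s. U a j * U b j)" by (simp add: gram_cube[OF sd])
    finally show ?thesis using Z(2)[OF ab] by simp
  qed
  have O: "(\<Sum>a<s. U a i * U a j) = (if i = j then 1 else 0)" if "j < s" for j
    by (rule orth_swap[OF G i that])
  show ?thesis
  proof (intro exI)
    show "downstream_err s d s i f (\<lambda>a. U a i) = 0"
      unfolding downstream_err_def
    proof (subst E_data_const[where h="\<lambda>_. 0"])
      fix xb \<tau> assume xb: "xb \<in> cube d"
      have "(\<Sum>a<s. U a i * f (aug s d xb \<tau>) a) = (\<Sum>a<s. \<Sum>j<s. (U a i * U a j) * xb j)"
        by (intro sum.cong refl) (simp add: fv sum_distrib_left mult_ac)
      also have "\<dots> = (\<Sum>j<s. (\<Sum>a<s. U a i * U a j) * xb j)"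
        by (subst sum.swap) (simp add: sum_distrib_right)
      also have "\<dots> = (\<Sum>j<s. (if i = j then xb j else 0))"
        by (intro sum.cong refl) (simp add: O)
      also have "\<dots> = xb i" using i by simp
      finally have e1: "(\<Sum>a<s. U a i * f (aug s d xb \<tau>) a) = xb i" .
      have e2: "sgn (aug s d xb \<tau> i) = xb i" using i sd xb by (simp add: aug_def cube_sgn)
      show "((\<Sum>a<s. U a i * f (aug s d xb \<tau>) a) - sgn (aug s d xb \<tau> i))\<^sup>2 = 0"
        using e1 e2 by simp
    qed simp
  qed
qed



definition fp :: "(nat \<Rightarrow> nat set) \<Rightarrow> (nat \<Rightarrow> real) \<Rightarrow> nat \<Rightarrow> real" where
  "fp T x a = (\<Prod>j\<in>T a. sgn (x j))"

lemma aug_meas: "j < d \<Longrightarrow> (\<lambda>\<tau>. aug s d xb \<tau> j) \<in> borel_measurable (tau_measure s d)"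
proof (cases "j < s")
  case True then show ?thesis by (simp add: aug_def)
next
  case False
  assume "j < d"
  then have j: "j \<in> {s..<d}" using False by auto
  have "(\<lambda>\<tau>. aug s d xb \<tau> j) = (\<lambda>\<tau>. \<tau> j * xb j)" using False \<open>j < d\<close> by (simp add: aug_def)
  also have "\<dots> \<in> borel_measurable (tau_measure s d)" using j by measurable
  finally show ?thesis .
qed

lemma fp_meas:
  assumes "T a \<subseteq> {..<d}"
  shows "(\<lambda>\<tau>. fp T (aug s d xb \<tau>) a) \<in> borel_measurable (tau_measure s d)"
  unfolding fp_def
proof (rule borel_measurable_prod)
  fix j assume "j \<in> T a"
  then have "j < d" using assms by auto
  then show "(\<lambda>\<tau>. sgn (aug s d xb \<tau> j)) \<in> borel_measurable (tau_measure s d)"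
    by (rule measurable_compose[OF aug_meas borel_measurable_sgn])
qed

lemma fp_bd: "\<bar>fp T x a\<bar> \<le> 1"
  unfolding fp_def abs_prod
  by (intro prod_le_1) (auto simp: sgn_real_def)

lemma fp_good:
  assumes "T a \<subseteq> {..<d}" "xb \<in> cube d" "gd s d \<tau>"
  shows "fp T (aug s d xb \<tau>) a = chi (T a) xb"
  unfolding fp_def chi_def
proof (intro prod.cong refl)
  fix j assume "j \<in> T a"
  then have jd: "j < d" using assms by auto
  show "sgn (aug s d xb \<tau> j) = xb j"
  proof (cases "j < s")
    case True then show ?thesis using cube_sgn[OF assms(2) jd] by (simp add: aug_def)
  next
    case False
    then have "j \<in> {s..<d}" using jd by auto
    then have "0 < \<tau> j" using assms(3) by (auto simp: gd_def dest!: bspec[where x=j])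
    then show ?thesis using False jd cube_sgn[OF assms(2) jd] by (simp add: aug_def sgn_mult)
  qed
qed

lemma E_data_AE:
  assumes "\<And>xb. xb \<in> cube d \<Longrightarrow> (\<lambda>\<tau>. g (aug s d xb \<tau>)) \<in> borel_measurable (tau_measure s d)"
    and "\<And>xb \<tau>. xb \<in> cube d \<Longrightarrow> gd s d \<tau> \<Longrightarrow> g (aug s d xb \<tau>) = h xb"
  shows "E_data s d g = (\<Sum>xb\<in>cube d. h xb) / 2 ^ d"
  unfolding E_data_def
proof (intro arg_cong2[where f="(/)"] sum.cong refl)
  fix xb assume xb: "xb \<in> cube d"
  have "(\<integral>\<tau>. g (aug s d xb \<tau>) \<partial>tau_measure s d) = (\<integral>\<tau>. h xb \<partial>tau_measure s d)"
  proof (rule integral_cong_AE)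
    show "(\<lambda>\<tau>. g (aug s d xb \<tau>)) \<in> borel_measurable (tau_measure s d)" by (rule assms(1)[OF xb])
    show "AE \<tau> in tau_measure s d. g (aug s d xb \<tau>) = h xb"
      using M_AE by eventually_elim (rule assms(2)[OF xb])
  qed simp
  then show "(\<integral>\<tau>. g (aug s d xb \<tau>) \<partial>tau_measure s d) = h xb"
    by (simp del: lebesgue_integral_const add: M_const)
qed


lemma part2:
  assumes s1: "1 \<le> s" and sd: "s \<le> d" and i: "i < s" and lam: "0 < lam"
    and k: "k \<le> 2 ^ (d - 1)"
  shows "\<exists>f'. is_argmin (loss s d k lam) (F_uni s d k) f' \<and> (\<forall>w. downstream_err s d k i f' w \<ge> 1)"
proof -
  have id: "i < d" using i sd by simp
  define P where "P = Pow ({..<d} - {i})"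
  have finP: "finite P" unfolding P_def by simp
  have cardP: "card P = 2 ^ (d - 1)"
    unfolding P_def using id by (simp add: card_Pow card_Diff_singleton)
  obtain h where h: "bij_betw h {0..<card P} P" using ex_bij_betw_nat_finite[OF finP] by blast
  define T where "T = h"
  have TP: "T a \<in> P" if "a < k" for a
    using h that k cardP unfolding T_def by (auto simp: bij_betw_def)
  have Tsub: "T a \<subseteq> {..<d}" if "a < k" for a using TP[OF that] by (auto simp: P_def)
  have Ti: "i \<notin> T a" if "a < k" for a using TP[OF that] by (auto simp: P_def)
  have Tinj: "T a = T b \<longleftrightarrow> a = b" if "a < k" "b < k" for a b
    using h that k cardP unfolding T_def bij_betw_def inj_on_def by auto
  define f' where "f' = fp T"
  have fgood: "f' (aug s d xb \<tau>) a = chi (T a) xb" if "a < k" "xb \<in> cube d" "gd s d \<tau>" for a xb \<tau>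
    unfolding f'_def by (rule fp_good[where T=T and a=a, OF Tsub[OF that(1)] that(2,3)])
  have fmeas: "(\<lambda>\<tau>. f' (aug s d xb \<tau>) a) \<in> borel_measurable (tau_measure s d)" if "a < k" for a xb
    unfolding f'_def by (rule fp_meas[where T=T and a=a, OF Tsub[OF that]])
  have fF: "f' \<in> F_uni s d k"
    unfolding F_uni_def
  proof (intro CollectI ballI allI impI conjI)
    fix xb j assume j: "j < k"
    show "(\<lambda>\<tau>. f' (aug s d xb \<tau>) j) \<in> borel_measurable (tau_measure s d)" by (rule fmeas[OF j])
    show "integrable (tau_measure s d) (\<lambda>\<tau>. (f' (aug s d xb \<tau>) j)\<^sup>2)"
    proof (rule M_int_bd[where B=1])
      show "(\<lambda>\<tau>. (f' (aug s d xb \<tau>) j)\<^sup>2) \<in> borel_measurable (tau_measure s d)"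
        using fmeas[OF j] by measurable
      fix \<tau>
      have "\<bar>f' (aug s d xb \<tau>) j\<bar> \<le> 1" unfolding f'_def by (rule fp_bd)
      then have "\<bar>f' (aug s d xb \<tau>) j\<bar>\<^sup>2 \<le> 1\<^sup>2" by (intro power_mono) auto
      then show "\<bar>(f' (aug s d xb \<tau>) j)\<^sup>2\<bar> \<le> 1" by simp
    qed
  qed
  have P0: "E_pos s d (\<lambda>x x'. \<Sum>j<k. (f' x j - f' x' j)\<^sup>2) = 0"
    unfolding E_pos_def
  proof -
    have "(\<integral>p. (\<Sum>j<k. (f' (aug s d xb (fst p)) j - f' (aug s d xb (snd p)) j)\<^sup>2)
        \<partial>(tau_measure s d \<Otimes>\<^sub>M tau_measure s d)) = 0" if xb: "xb \<in> cube d" for xb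
    proof (rule integral_eq_zero_AE)
      show "AE p in tau_measure s d \<Otimes>\<^sub>M tau_measure s d.
          (\<Sum>j<k. (f' (aug s d xb (fst p)) j - f' (aug s d xb (snd p)) j)\<^sup>2) = 0"
        using pair_AE
      proof eventually_elim
        case (elim p)
        then show ?case by (intro sum.neutral) (simp add: fgood xb)
      qed
    qed
    then show "(\<Sum>xb\<in>cube d. \<integral>p. (\<Sum>j<k. (f' (aug s d xb (fst p)) j - f' (aug s d xb (snd p)) j)\<^sup>2)
        \<partial>(tau_measure s d \<Otimes>\<^sub>M tau_measure s d)) / 2 ^ d = 0" by simp
  qed
  have D: "E_data s d (\<lambda>x. f' x a * f' x b) = (if a = b then 1 else 0)" if ab: "a < k" "b < k" for a b
  proof -
    have "E_data s d (\<lambda>x. f' x a * f' x b) = (\<Sum>xb\<in>cube d. chi (T a) xb * chi (T b) xb) / 2 ^ d"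
    proof (rule E_data_AE)
      fix xb
      show "(\<lambda>\<tau>. f' (aug s d xb \<tau>) a * f' (aug s d xb \<tau>) b) \<in> borel_measurable (tau_measure s d)"
        using fmeas[OF ab(1)] fmeas[OF ab(2)] by measurable
    qed (simp add: fgood ab)
    also have "\<dots> = (if a = b then 1 else 0)"
      using orth[OF Tsub[OF ab(1)] Tsub[OF ab(2)]] Tinj[OF ab] by simp
    finally show ?thesis .
  qed
  have L0: "loss s d k lam f' = 0" unfolding loss_def using P0 D by simp
  have am: "is_argmin (loss s d k lam) (F_uni s d k) f'"
    unfolding is_argmin_def using fF L0 loss_nonneg lam by auto
  have dw: "downstream_err s d k i f' w \<ge> 1" for w
  proof -
    define g where "g xb = (\<Sum>a<k. w a * chi (T a) xb)" for xb
    have "downstream_err s d k i f' w = (\<Sum>xb\<in>cube d. (g xb - xb i)\<^sup>2) / 2 ^ d"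
      unfolding downstream_err_def
    proof (rule E_data_AE)
      fix xb
      have m1: "(\<lambda>\<tau>. \<Sum>a<k. w a * f' (aug s d xb \<tau>) a) \<in> borel_measurable (tau_measure s d)"
        using fmeas by (intro borel_measurable_sum borel_measurable_times) auto
      have m2: "(\<lambda>\<tau>. sgn (aug s d xb \<tau> i)) \<in> borel_measurable (tau_measure s d)"
        by (rule measurable_compose[OF aug_meas[OF id] borel_measurable_sgn])
      show "(\<lambda>\<tau>. ((\<Sum>a<k. w a * f' (aug s d xb \<tau>) a) - sgn (aug s d xb \<tau> i))\<^sup>2) \<in> borel_measurable (tau_measure s d)"
        using m1 m2 by measurable
    next
      fix xb \<tau> assume xb: "xb \<in> cube d" and g: "gd s d \<tau>"
      have "(\<Sum>a<k. w a * f' (aug s d xb \<tau>) a) = g xb"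
        unfolding g_def by (intro sum.cong refl) (simp add: fgood xb g)
      moreover have "sgn (aug s d xb \<tau> i) = xb i" using i cube_sgn[OF xb id] by (simp add: aug_def)
      ultimately show "((\<Sum>a<k. w a * f' (aug s d xb \<tau>) a) - sgn (aug s d xb \<tau> i))\<^sup>2 = (g xb - xb i)\<^sup>2"
        by simp
    qed
    also have "\<dots> \<ge> 1"
    proof -
      have cross: "(\<Sum>xb\<in>cube d. g xb * xb i) = 0"
      proof -
        have "(\<Sum>xb\<in>cube d. g xb * xb i) = (\<Sum>a<k. w a * (\<Sum>xb\<in>cube d. chi (T a) xb * chi {i} xb))"
          unfolding g_def chi_def[of "{i}"]
          by (simp add: sum_distrib_right sum_distrib_left mult_ac sum.swap[of _ "cube d"])
        also have "\<dots> = 0"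
        proof (intro sum.neutral ballI)
          fix a assume a: "a \<in> {..<k}"
          have "T a \<noteq> {i}" using Ti a by auto
          then show "w a * (\<Sum>xb\<in>cube d. chi (T a) xb * chi {i} xb) = 0"
            using orth[OF Tsub, of a "{i}"] a id by simp
        qed
        finally show ?thesis .
      qed
      have sq: "(\<Sum>xb\<in>cube d. xb i * xb i) = 2 ^ d" using cube_pair[OF id id] by simp
      have "(\<Sum>xb\<in>cube d. (g xb - xb i)\<^sup>2) \<ge> (\<Sum>xb\<in>cube d. xb i * xb i - 2 * (g xb * xb i))"
      proof (rule sum_mono)
        fix xb
        have "0 \<le> (g xb)\<^sup>2" by simp
        then show "xb i * xb i - 2 * (g xb * xb i) \<le> (g xb - xb i)\<^sup>2"
          by (simp add: power2_eq_square algebra_simps)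
      qed
      also have "(\<Sum>xb\<in>cube d. xb i * xb i - 2 * (g xb * xb i)) = 2 ^ d"
        using cross sq by (simp add: sum_subtractf sum_distrib_left[symmetric])
      finally show ?thesis by simp
    qed
    finally show ?thesis .
  qed
  show ?thesis using am dw by blast
qed


theorem theorem4:
  fixes s d i :: nat and lam :: real
  assumes "1 \<le> s" and "s \<le> d" and "i < s" and "lam > 0"
  shows "(\<forall>f. is_argmin (loss s d s lam) (F_linear d) f \<longrightarrow>
            (\<exists>w. downstream_err s d s i f w = 0))
       \<and> (\<forall>k. k \<le> 2 ^ (d - 1) \<longrightarrow>
            (\<exists>f'. is_argmin (loss s d k lam) (F_uni s d k) f' \<and>
                  (\<forall>w. downstream_err s d k i f' w \<ge> 1)))"
proof (intro conjI allI impI)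
  fix f assume "is_argmin (loss s d s lam) (F_linear d) f"
  then show "\<exists>w. downstream_err s d s i f w = 0"
    using part1 assms by blast
next
  fix k :: nat assume "k \<le> 2 ^ (d - 1)"
  then show "\<exists>f'. is_argmin (loss s d k lam) (F_uni s d k) f' \<and> (\<forall>w. downstream_err s d k i f' w \<ge> 1)"
    using part2 assms by blast
qed

end
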